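(* Let $\Gamma$ be a determined pointclass on $C^\omega$. Let $\langle\{a,b\},C,d,O,v,(\prec_a,\prec_b)\rangle$ be a two-player infinite sequential game with $O=\{y,x_1,\dots,x_n\}$ ($n\ge1$, all distinct), in which every outcome is realizable, $v$ is $\Gamma$-measurable, and the preferences are the linear orders $y\prec_a x_1\prec_a\cdots\prec_a x_n$ and $y\prec_b x_n\prec_b\cdots\prec_b x_1$. Then the game has a Pareto-optimal Nash equilibrium.
   Context: $C$ is a non-empty set of choices, $d:C^*\to\{a,b\}$ the chooser after each history, $v:C^\omega\to O$. A strategy of $X$ is a function $s:d^{-1}(\{X\})\to C$; a profile is identified with $\sigma:C^*\to C$, inducing the play $p(\sigma)$ with $p_n=\sigma(p_{<n})$. $\sigma$ is a Nash equilibrium if no player $X$ has a strategy $s$ with $v(p(\sigma))\prec_X v(p(\sigma_{X\mapsto s}))$ ($\sigma_{X\mapsto s}$ agrees with $s$ on $d^{-1}(\{X\})$, with $\sigma$ elsewhere). An outcome is realizable if it equals $v(p)$ for some $p\in C^\omega$. An outcome $o$ is Pareto-optimal if there is no realizable outcome $q$ such that $o\prec_X q$ for some player $X$ and $q\prec_Y o$ for no player $Y$; a Nash equilibrium is Pareto-optimal if its induced outcome is. A pointclass $\Gamma$ is a collection of subsets of $C^\omega$ closed under continuous preimages; it is determined if for every $W\in\Gamma$ and $D\subseteq C^*$ the win-lose game $\langle C,D,W\rangle$ (first player chooses after histories in $D$, second after the others, first player wins iff the play is in $W$) has a winning strategy for one of the players. $v$ is $\Gamma$-measurable if $v^{-1}[Q]\in\Gamma$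 for all $Q\subseteq O$. *)

theory Defs
  imports Main
begin

datatype player = PA | PB

text \<open>Choices are the elements of the type 'c (the nonempty set C); histories are
  lists, plays are functions nat => 'c.  A profile is a function on all histories.\<close>

fun hist :: "('c list \<Rightarrow> 'c) \<Rightarrow> nat \<Rightarrow> 'c list" where
  "hist \<sigma> 0 = []"
| "hist \<sigma> (Suc k) = hist \<sigma> k @ [\<sigma> (hist \<sigma> k)]"

definition play :: "('c list \<Rightarrow> 'c) \<Rightarrow> nat \<Rightarrow> 'c" where
  "play \<sigma> k = \<sigma> (hist \<sigma> k)"

text \<open>Continuity on C^omega (product of discrete topologies).\<close>
definition cont_seq :: "((nat \<Rightarrow> 'c) \<Rightarrow> (nat \<Rightarrow> 'c)) \<Rightarrow> bool" where
  "cont_seq f \<longleftrightarrow> (\<forall>p k. \<exists>m. \<forall>q. (\<forall>i<m. q i = p i) \<longrightarrow> f q k = f p k)"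

definition pointclass :: "(nat \<Rightarrow> 'c) set set \<Rightarrow> bool" where
  "pointclass \<Gamma> \<longleftrightarrow> (\<forall>W\<in>\<Gamma>. \<forall>f. cont_seq f \<longrightarrow> f -` W \<in> \<Gamma>)"

text \<open>Win-lose game <C,D,W>: first player moves after histories in D.\<close>
definition wl_profile :: "'c list set \<Rightarrow> ('c list \<Rightarrow> 'c) \<Rightarrow> ('c list \<Rightarrow> 'c) \<Rightarrow> 'c list \<Rightarrow> 'c" where
  "wl_profile D s t = (\<lambda>h. if h \<in> D then s h else t h)"

definition determined :: "(nat \<Rightarrow> 'c) set set \<Rightarrow> bool" where
  "determined \<Gamma> \<longleftrightarrow> (\<forall>W\<in>\<Gamma>. \<forall>D.
      (\<exists>s. \<forall>t. play (wl_profile D s t) \<in> W) \<or> (\<exists>t. \<forall>s. play (wl_profile D s t) \<notin> W))"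

definition measurable_in :: "(nat \<Rightarrow> 'c) set set \<Rightarrow> ((nat \<Rightarrow> 'c) \<Rightarrow> 'o) \<Rightarrow> bool" where
  "measurable_in \<Gamma> v \<longleftrightarrow> (\<forall>Q. v -` Q \<in> \<Gamma>)"

definition deviate :: "('c list \<Rightarrow> player) \<Rightarrow> ('c list \<Rightarrow> 'c) \<Rightarrow> player \<Rightarrow> ('c list \<Rightarrow> 'c) \<Rightarrow> 'c list \<Rightarrow> 'c" where
  "deviate d \<sigma> X s = (\<lambda>h. if d h = X then s h else \<sigma> h)"

definition nash :: "('c list \<Rightarrow> player) \<Rightarrow> ((nat \<Rightarrow> 'c) \<Rightarrow> 'o) \<Rightarrow> (player \<Rightarrow> 'o \<Rightarrow> 'o \<Rightarrow> bool)
    \<Rightarrow> ('c list \<Rightarrow> 'c) \<Rightarrow> bool" where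
  "nash d v pref \<sigma> \<longleftrightarrow> (\<forall>X s. \<not> pref X (v (play \<sigma>)) (v (play (deviate d \<sigma> X s))))"

definition realizable :: "((nat \<Rightarrow> 'c) \<Rightarrow> 'o) \<Rightarrow> 'o \<Rightarrow> bool" where
  "realizable v out \<longleftrightarrow> (\<exists>p. v p = out)"

definition pareto_optimal :: "((nat \<Rightarrow> 'c) \<Rightarrow> 'o) \<Rightarrow> (player \<Rightarrow> 'o \<Rightarrow> 'o \<Rightarrow> bool) \<Rightarrow> 'o \<Rightarrow> bool" where
  "pareto_optimal v pref out \<longleftrightarrow>
     \<not> (\<exists>q. realizable v q \<and> (\<exists>X. pref X out q) \<and> (\<forall>Y. \<not> pref Y q out))"

end

theory Submission
  imports Defs
begin

definition pre :: "(nat \<Rightarrow> 'c) \<Rightarrow> nat \<Rightarrow> 'c list" where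
  "pre p k = map p [0..<k]"

definition gp :: "'c list \<Rightarrow> (nat \<Rightarrow> 'c) \<Rightarrow> nat \<Rightarrow> 'c" where
  "gp h q = (\<lambda>k. if k < length h then h!k else q (k - length h))"

definition win :: "('c list \<Rightarrow> player) \<Rightarrow> ((nat \<Rightarrow> 'c) \<Rightarrow> 'o) \<Rightarrow> player \<Rightarrow> 'c list \<Rightarrow> 'o set
   \<Rightarrow> ('c list \<Rightarrow> 'c) \<Rightarrow> bool" where
  "win d v Z h Q f \<longleftrightarrow> (\<forall>g. v (gp h (play (\<lambda>l. if d (h@l) = Z then g l else f l))) \<in> Q)"

fun oth :: "player \<Rightarrow> player" where "oth PA = PB" | "oth PB = PA"

lemma length_pre[simp]: "length (pre p k) = k" by (simp add: pre_def)

lemma pre_Suc: "pre p (Suc k) = pre p k @ [p k]" by (simp add: pre_def)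

lemma pre_0[simp]: "pre p 0 = []" by (simp add: pre_def)

lemma pre_nth: "j < k \<Longrightarrow> pre p k ! j = p j" by (simp add: pre_def)

lemma hist_pre: "hist \<sigma> k = pre (play \<sigma>) k"
  by (induction k) (auto simp: pre_Suc play_def)

lemma play_pre: "play \<sigma> k = \<sigma> (pre (play \<sigma>) k)"
  by (simp add: play_def hist_pre)

lemma pre_eqI: "(\<And>j. j < k \<Longrightarrow> p j = q j) \<Longrightarrow> pre p k = pre q k"
  by (simp add: pre_def)

lemma hist_shift:
  assumes "hist \<sigma> (length h) = h"
  shows "hist \<sigma> (length h + k) = h @ hist (\<lambda>l. \<sigma> (h @ l)) k"
  by (induction k) (auto simp: assms)

lemma play_shift:
  assumes "pre (play \<sigma>) (length h) = h"
  shows "play \<sigma> = gp h (play (\<lambda>l. \<sigma> (h @ l)))"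
proof
  fix k
  have H: "hist \<sigma> (length h) = h" using assms by (simp add: hist_pre)
  show "play \<sigma> k = gp h (play (\<lambda>l. \<sigma> (h @ l))) k"
  proof (cases "k < length h")
    case True
    then have "h ! k = play \<sigma> k" using assms pre_nth by metis
    then show ?thesis using True by (simp add: gp_def)
  next
    case False
    then obtain m where m: "k = length h + m" by (metis le_add_diff_inverse not_less)
    have "play \<sigma> k = \<sigma> (hist \<sigma> (length h + m))" by (simp add: play_def m)
    also have "\<dots> = \<sigma> (h @ hist (\<lambda>l. \<sigma> (h @ l)) m)" using hist_shift[OF H] by simp
    finally show ?thesis using False by (simp add: gp_def play_def m)
  qed
qed

lemma gp_gp: "gp h (gp h' q) = gp (h @ h') q"
  by (auto simp: gp_def nth_append fun_eq_iff)

lemma pre_gp: "pre (gp h q) k = (if k \<le> length h then take k h else h @ pre q (k - length h))"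
  by (auto simp: pre_def gp_def nth_append intro!: nth_equalityI)

lemma cont_gp: "cont_seq (gp h)"
  unfolding cont_seq_def gp_def
  by (metis diff_le_self le_imp_less_Suc)

lemma det_win:
  assumes "pointclass \<Gamma>" "determined \<Gamma>" "measurable_in \<Gamma> v"
  shows "(\<exists>f. win d v Z h Q f) \<or> (\<exists>f. win d v (oth Z) h (- Q) f)"
proof -
  have G: "\<And>Q. (\<exists>f. win d v PB h Q f) \<or> (\<exists>f. win d v PA h (- Q) f)"
  proof -
    fix Q
    have W: "gp h -` (v -` Q) \<in> \<Gamma>" using assms cont_gp unfolding pointclass_def measurable_in_def by blast
    have eq: "\<And>s g. (\<lambda>l. if d (h@l) = PB then g l else s l) = wl_profile {l. d (h@l) = PA} s g"
      by (auto simp: wl_profile_def fun_eq_iff) (metis player.exhaust)+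
    have eq2: "\<And>s g. (\<lambda>l. if d (h@l) = PA then g l else s l) = wl_profile {l. d (h@l) = PA} g s"
      by (auto simp: wl_profile_def fun_eq_iff)
    from assms(2) W have "(\<exists>s. \<forall>t. play (wl_profile {l. d (h@l) = PA} s t) \<in> gp h -` (v -` Q)) \<or>
        (\<exists>t. \<forall>s. play (wl_profile {l. d (h@l) = PA} s t) \<notin> gp h -` (v -` Q))"
      unfolding determined_def by blast
    then show "(\<exists>f. win d v PB h Q f) \<or> (\<exists>f. win d v PA h (- Q) f)"
      unfolding win_def eq eq2 by auto
  qed
  show ?thesis
  proof (cases Z)
    case PA
    from G[of "- Q"] show ?thesis using PA by auto
  next
    case PB
    from G[of Q] show ?thesis using PB by auto
  qed
qed

lemma win_mono: "win d v Z h Q f \<Longrightarrow> (\<And>w. w \<in> Q \<Longrightarrow> w \<in> range v \<Longrightarrow> w \<in> Q') \<Longrightarrow> win d v Z h Q' f"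
  unfolding win_def by blast

lemma win_child:
  fixes h :: "'c list" and c :: 'c
  assumes "win d v Z h Q f" "d h = Z \<or> c = f []"
  shows "win d v Z (h @ [c]) Q (\<lambda>l. f (c # l))"
  unfolding win_def
proof
  fix g' :: "'c list \<Rightarrow> 'c"
  define g where "g = (\<lambda>l. case l of [] \<Rightarrow> c | _ # l' \<Rightarrow> g' l')"
  define \<pi> where "\<pi> = (\<lambda>l. if d (h @ l) = Z then g l else f l)"
  have "\<pi> [] = c" using assms(2) by (auto simp: \<pi>_def g_def)
  then have "pre (play \<pi>) (length [c]) = [c]"
    by (simp add: pre_Suc play_pre)
  then have P: "play \<pi> = gp [c] (play (\<lambda>l. \<pi> ([c] @ l)))" by (rule play_shift)
  have E: "(\<lambda>l. \<pi> ([c] @ l)) = (\<lambda>l. if d ((h @ [c]) @ l) = Z then g' l else f (c # l))"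
    by (auto simp: \<pi>_def g_def fun_eq_iff)
  have "v (gp h (play \<pi>)) \<in> Q" using assms(1) unfolding win_def \<pi>_def by blast
  then show "v (gp (h @ [c]) (play (\<lambda>l. if d ((h @ [c]) @ l) = Z then g' l else f (c # l)))) \<in> Q"
    using P E by (simp add: gp_gp)
qed

lemma win_path:
  assumes "win d v Z h Q f" "\<pi> = (\<lambda>l. if d (h @ l) = Z then g l else f l)"
  shows "win d v Z (h @ pre (play \<pi>) m) Q (\<lambda>l. f (pre (play \<pi>) m @ l))"
proof (induction m)
  case 0
  then show ?case using assms(1) by simp
next
  case (Suc m)
  have "d (h @ pre (play \<pi>) m) = Z \<or> play \<pi> m = f (pre (play \<pi>) m @ [])"
    using assms(2) play_pre[of \<pi> m] by auto
  from win_child[OF Suc this] show ?case by (simp add: pre_Suc)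
qed

lemma nash_from_path:
  assumes irr: "\<And>Z u. \<not> pref Z u u"
    and hyp: "\<And>k c. c \<noteq> p k \<Longrightarrow> \<exists>f. win d v (d (pre p k)) (pre p k @ [c]) {w. \<not> pref (d (pre p k)) (v p) w} f"
  shows "\<exists>\<sigma>. play \<sigma> = p \<and> nash d v pref \<sigma>"
proof -
  define F where "F = (\<lambda>k c. SOME f. win d v (d (pre p k)) (pre p k @ [c]) {w. \<not> pref (d (pre p k)) (v p) w} f)"
  have F: "c \<noteq> p k \<Longrightarrow> win d v (d (pre p k)) (pre p k @ [c]) {w. \<not> pref (d (pre p k)) (v p) w} (F k c)" for k c
    unfolding F_def using hyp by (rule someI_ex)
  define \<sigma> where "\<sigma> = (\<lambda>l. if l = pre p (length l) then p (length l)
      else (let k = (LEAST k. k < length l \<and> l ! k \<noteq> p k) in F k (l ! k) (drop (Suc k) l)))"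
  have pp: "pre (play \<sigma>) k = pre p k" for k
  proof (induction k)
    case (Suc k)
    have "play \<sigma> k = \<sigma> (pre p k)" using Suc play_pre by metis
    also have "\<dots> = p k" unfolding \<sigma>_def by simp
    finally show ?case using Suc by (simp add: pre_Suc)
  qed simp
  have P: "play \<sigma> = p"
  proof
    fix k have "play \<sigma> k = \<sigma> (pre p k)" using pp play_pre by metis
    then show "play \<sigma> k = p k" unfolding \<sigma>_def by simp
  qed
  have "nash d v pref \<sigma>"
    unfolding nash_def
  proof (intro allI notI)
    fix X s
    define \<tau> where "\<tau> = deviate d \<sigma> X s"
    assume pr: "pref X (v (play \<sigma>)) (v (play (deviate d \<sigma> X s)))"
    show False
    proof (cases "play \<tau> = p")
      case True then show False using pr irr P \<tau>_def by metis
    next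
      case False
      then obtain k0 where "play \<tau> k0 \<noteq> p k0" by auto
      define k where "k = (LEAST k. play \<tau> k \<noteq> p k)"
      have k1: "play \<tau> k \<noteq> p k" unfolding k_def by (rule LeastI, fact)
      have k2: "j < k \<Longrightarrow> play \<tau> j = p j" for j unfolding k_def using not_less_Least by blast
      have pk: "pre (play \<tau>) k = pre p k" using k2 by (intro pre_eqI) 
      define c where "c = play \<tau> k"
      have t1: "\<tau> (pre p k) = c" using pk play_pre[of \<tau> k] c_def by simp
      have t2: "\<sigma> (pre p k) = p k" unfolding \<sigma>_def by simp
      have "\<tau> (pre p k) \<noteq> \<sigma> (pre p k)" using t1 t2 k1 c_def by simp
      then have dX: "d (pre p k) = X"
      proof (rule contrapos_np)
        assume "d (pre p k) \<noteq> X"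
        then show "\<tau> (pre p k) = \<sigma> (pre p k)" unfolding \<tau>_def deviate_def by simp
      qed
      define h where "h = pre p k @ [c]"
      have lh: "length h = Suc k" by (simp add: h_def)
      have ph: "pre (play \<tau>) (length h) = h" using pk lh by (simp add: pre_Suc h_def c_def)
      have W: "win d v X h {w. \<not> pref X (v p) w} (F k c)" using F[of c k] k1 dX c_def h_def by simp
      have sh: "(\<lambda>l. \<tau> (h @ l)) = (\<lambda>l. if d (h @ l) = X then s (h @ l) else F k c l)"
      proof
        fix l
        have ne: "h @ l \<noteq> pre p (length (h @ l))"
        proof
          assume "h @ l = pre p (length (h @ l))"
          then have "(h @ l) ! k = pre p (length (h @ l)) ! k" by simp
          also have "\<dots> = p k" using lh by (intro pre_nth) simp
          finally have "(h @ l) ! k = p k" .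
          then show False using k1 c_def h_def by (simp add: nth_append)
        qed
        have L: "(LEAST j. j < length (h @ l) \<and> (h @ l) ! j \<noteq> p j) = k"
        proof (rule Least_equality)
          show "k < length (h @ l) \<and> (h @ l) ! k \<noteq> p k" using k1 c_def h_def by (simp add: nth_append)
        next
          fix j assume "j < length (h @ l) \<and> (h @ l) ! j \<noteq> p j"
          then show "k \<le> j" using h_def pre_nth[of j k p] by (cases "j < k") (auto simp: nth_append)
        qed
        have "(h @ l) ! k = c" by (simp add: h_def nth_append)
        moreover have "drop (Suc k) (h @ l) = l" using lh by simp
        ultimately have "\<sigma> (h @ l) = F k c l" using ne L by (simp add: \<sigma>_def Let_def)
        then show "\<tau> (h @ l) = (if d (h @ l) = X then s (h @ l) else F k c l)"
          by (simp add: \<tau>_def deviate_def)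
      qed
      have "play \<tau> = gp h (play (\<lambda>l. \<tau> (h @ l)))" by (rule play_shift[OF ph])
      then have "v (play \<tau>) \<in> {w. \<not> pref X (v p) w}" using W sh unfolding win_def by metis
      then show False using pr P \<tau>_def by simp
    qed
  qed
  then show ?thesis using P by blast
qed

lemma oth_cases: "Z = X \<or> Z = oth X"
  by (cases Z; cases X) auto

lemma oth_oth[simp]: "oth (oth X) = X" by (cases X) auto

lemma oth_neq[simp]: "oth X \<noteq> X" by (cases X) auto
lemma oth_neq2[simp]: "X \<noteq> oth X" by (cases X) auto

lemma easy_case:
  fixes r :: "'o \<Rightarrow> nat" and hh :: "'c list"
  assumes pc: "pointclass \<Gamma>" and dt: "determined \<Gamma>" and ms: "measurable_in \<Gamma> v"
    and rX: "\<And>u w. u \<in> range v \<Longrightarrow> w \<in> range v \<Longrightarrow> pref X u w \<Longrightarrow> r u < r w"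
    and rY: "\<And>u w. u \<in> range v \<Longrightarrow> w \<in> range v \<Longrightarrow> pref (oth X) u w \<Longrightarrow> r u = 0 \<or> r w < r u"
    and ry: "r y = 0" and rnz: "\<And>w. w \<in> range v \<Longrightarrow> w \<noteq> y \<Longrightarrow> 1 \<le> r w"
    and rn: "\<And>w. w \<in> range v \<Longrightarrow> r w \<le> n"
    and noy: "\<And>Z u. \<not> pref Z u y"
    and start: "win d v (oth X) hh (- {y}) ff"
    and phh: "\<And>k c. k < length hh \<Longrightarrow> c \<noteq> hh ! k \<Longrightarrow> \<exists>f. win d v (d (take k hh)) (take k hh @ [c]) {y} f"
  shows "\<exists>p. v p \<noteq> y \<and> (\<forall>k c. c \<noteq> p k \<longrightarrow>
           (\<exists>f. win d v (d (pre p k)) (pre p k @ [c]) {w. \<not> pref (d (pre p k)) (v p) w} f))"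
proof -
  define Y where "Y = oth X"
  define S where "S = (\<lambda>i. \<exists>f. win d v Y hh {w. i \<le> r w} f)"
  have "win d v Y hh {w. 1 \<le> r w} ff" unfolding Y_def by (rule win_mono[OF start]) (use rnz in auto)
  then have S1: "S 1" unfolding S_def by blast
  have Sn: "\<not> S (Suc n)"
  proof
    assume "S (Suc n)"
    then obtain f where "win d v Y hh {w. Suc n \<le> r w} f" unfolding S_def by blast
    then have "v (gp hh (play (\<lambda>l. if d (hh @ l) = Y then undefined l else f l))) \<in> {w. Suc n \<le> r w}"
      unfolding win_def by blast
    then show False using rn[of "v (gp hh (play (\<lambda>l. if d (hh @ l) = Y then undefined l else f l)))"] by simp
  qed
  have Sb: "S j \<Longrightarrow> j \<le> n" for j
  proof (rule ccontr)
    assume "S j" "\<not> j \<le> n"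
    then obtain f where "win d v Y hh {w. j \<le> r w} f" unfolding S_def by blast
    then have "win d v Y hh {w. Suc n \<le> r w} f" by (rule win_mono) (use \<open>\<not> j \<le> n\<close> in auto)
    then show False using Sn unfolding S_def by blast
  qed
  define i where "i = (GREATEST i. S i)"
  have Si: "S i" unfolding i_def by (rule GreatestI_nat[of S 1 n, OF S1 Sb])
  have i1: "1 \<le> i" unfolding i_def by (rule Greatest_le_nat[of S 1 n, OF S1 Sb])
  have nSi: "\<not> S (Suc i)"
  proof
    assume "S (Suc i)"
    then have "Suc i \<le> i" using Greatest_le_nat[of S "Suc i" n, OF _ Sb] i_def by simp
    then show False by simp
  qed
  obtain s where s: "win d v Y hh {w. i \<le> r w} s" using Si unfolding S_def by blast
  have "(\<exists>f. win d v Y hh {w. Suc i \<le> r w} f) \<or> (\<exists>f. win d v (oth Y) hh (- {w. Suc i \<le> r w}) f)"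
    by (rule det_win[OF pc dt ms])
  then obtain t where t: "win d v X hh (- {w. Suc i \<le> r w}) t" using nSi unfolding S_def Y_def by auto
  define \<pi> where "\<pi> = (\<lambda>l. if d (hh @ l) = X then s l else t l)"
  have \<pi>2: "\<pi> = (\<lambda>l. if d (hh @ l) = Y then t l else s l)"
  proof
    fix l show "\<pi> l = (if d (hh @ l) = Y then t l else s l)"
    proof (cases "d (hh @ l) = X")
      case True then show ?thesis by (simp add: \<pi>_def Y_def)
    next
      case False then have "d (hh @ l) = Y" unfolding Y_def using oth_cases by blast
      then show ?thesis using False by (simp add: \<pi>_def)
    qed
  qed
  define p where "p = gp hh (play \<pi>)"
  have vr: "v p \<in> range v" by simp
  have "v p \<in> - {w. Suc i \<le> r w}" using t unfolding win_def \<pi>_def p_def by blast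
  then have o1: "r (v p) \<le> i" by simp
  have o2: "i \<le> r (v p)" using s unfolding win_def \<pi>2 p_def by blast
  have ri: "r (v p) = i" using o1 o2 by simp
  have ny: "v p \<noteq> y" using ri i1 ry by auto
  have G: "\<exists>f. win d v (d (pre p k)) (pre p k @ [c]) {w. \<not> pref (d (pre p k)) (v p) w} f"
    if c: "c \<noteq> p k" for k c
  proof (cases "k < length hh")
    case True
    have "pre p k = take k hh" using True by (simp add: p_def pre_gp)
    moreover have "p k = hh ! k" using True by (simp add: p_def gp_def)
    ultimately obtain f where "win d v (d (pre p k)) (pre p k @ [c]) {y} f" using phh[OF True] c by auto
    then show ?thesis using noy by (intro exI) (erule win_mono, auto)
  next
    case False
    define m where "m = k - length hh"
    have pk: "pre p k = hh @ pre (play \<pi>) m" using False by (simp add: p_def pre_gp m_def)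
    have pk2: "p k = \<pi> (pre (play \<pi>) m)" using False by (simp add: p_def gp_def m_def play_pre[symmetric])
    show ?thesis
    proof (cases "d (pre p k) = X")
      case True
      have w1: "win d v X (hh @ pre (play \<pi>) m) (- {w. Suc i \<le> r w}) (\<lambda>l. t (pre (play \<pi>) m @ l))"
        by (rule win_path[OF t \<pi>_def])
      have "win d v X (pre p k @ [c]) (- {w. Suc i \<le> r w}) (\<lambda>l. t (pre (play \<pi>) m @ c # l))"
        using win_child[OF w1, of c] True pk by simp
      then have "win d v X (pre p k @ [c]) {w. \<not> pref X (v p) w} (\<lambda>l. t (pre (play \<pi>) m @ c # l))"
        by (rule win_mono) (use rX[OF vr] ri in fastforce)
      then show ?thesis using True by auto
    next
      case False
      then have dY: "d (pre p k) = Y" unfolding Y_def using oth_cases by blast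
      have w1: "win d v Y (hh @ pre (play \<pi>) m) {w. i \<le> r w} (\<lambda>l. s (pre (play \<pi>) m @ l))"
        by (rule win_path[OF s \<pi>2])
      have "win d v Y (pre p k @ [c]) {w. i \<le> r w} (\<lambda>l. s (pre (play \<pi>) m @ c # l))"
        using win_child[OF w1, of c] dY pk by simp
      then have "win d v Y (pre p k @ [c]) {w. \<not> pref Y (v p) w} (\<lambda>l. s (pre (play \<pi>) m @ c # l))"
        by (rule win_mono) (use rY[OF vr] ri i1 in \<open>fastforce simp: Y_def\<close>)
      then show ?thesis using dY by auto
    qed
  qed
  show ?thesis using ny G by blast
qed

lemma take_pre: "k \<le> m \<Longrightarrow> take k (pre p m) = pre p k"
  by (simp add: pre_def take_map)

theorem lemma30:
  fixes \<Gamma> :: "(nat \<Rightarrow> 'c) set set"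
    and d :: "'c list \<Rightarrow> player"
    and v :: "(nat \<Rightarrow> 'c) \<Rightarrow> 'o"
    and pref :: "player \<Rightarrow> 'o \<Rightarrow> 'o \<Rightarrow> bool"
    and y :: 'o and x :: "nat \<Rightarrow> 'o" and n :: nat
  assumes "pointclass \<Gamma>" and "determined \<Gamma>"
    and "n \<ge> 1"
    and "inj_on x {1..n}" and "y \<notin> x ` {1..n}"
    and "range v = insert y (x ` {1..n})"
    and "measurable_in \<Gamma> v"
    and "\<And>u w. pref PA u w \<longleftrightarrow>
           (u = y \<and> w \<in> x ` {1..n}) \<or> (\<exists>i j. 1 \<le> i \<and> i < j \<and> j \<le> n \<and> u = x i \<and> w = x j)"
    and "\<And>u w. pref PB u w \<longleftrightarrow>
           (u = y \<and> w \<in> x ` {1..n}) \<or> (\<exists>i j. 1 \<le> j \<and> j < i \<and> i \<le> n \<and> u = x i \<and> w = x j)"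
  shows "\<exists>\<sigma>. nash d v pref \<sigma> \<and> pareto_optimal v pref (v (play \<sigma>))"
proof -
  note pc = assms(1) and dt = assms(2) and n1 = assms(3) and inj = assms(4) and yx = assms(5)
    and rg = assms(6) and ms = assms(7) and pA = assms(8) and pB = assms(9)
  have xe: "x i = x j \<longleftrightarrow> i = j" if "i \<in> {1..n}" "j \<in> {1..n}" for i j
    using inj that unfolding inj_on_def by blast
  have yne: "x i \<noteq> y" if "i \<in> {1..n}" for i using yx that by blast
  have prefZ: "pref Z u w \<longleftrightarrow> (u = y \<and> w \<in> x ` {1..n}) \<or>
     (\<exists>i j. i \<in> {1..n} \<and> j \<in> {1..n} \<and> u = x i \<and> w = x j \<and> (if Z = PA then i < j else j < i))" for Z u w
  proof (cases Z)
    case PA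
    show ?thesis unfolding PA pA
      apply (rule iffI)
       apply (erule disjE, blast)
       apply (elim exE conjE, rule disjI2, rule_tac x=i in exI, rule_tac x=j in exI, simp)
      apply (erule disjE, blast)
      apply (elim exE conjE, rule disjI2, rule_tac x=i in exI, rule_tac x=j in exI, simp)
      done
  next
    case PB
    show ?thesis unfolding PB pB
      apply (rule iffI)
       apply (erule disjE, blast)
       apply (elim exE conjE, rule disjI2, rule_tac x=i in exI, rule_tac x=j in exI, simp)
      apply (erule disjE, blast)
      apply (elim exE conjE, rule disjI2, rule_tac x=i in exI, rule_tac x=j in exI, simp)
      done
  qed
  have irr: "\<not> pref Z u u" for Z u
  proof
    assume "pref Z u u"
    then have "(u = y \<and> u \<in> x ` {1..n}) \<or> (\<exists>i j. i \<in> {1..n} \<and> j \<in> {1..n} \<and> x i = x j \<and> i \<noteq> j)"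
      unfolding prefZ
      apply (elim disjE exE conjE)
       apply blast
      apply (rule disjI2, rule_tac x=i in exI, rule_tac x=j in exI)
      apply (intro conjI)
         apply assumption
        apply assumption
       apply (simp only:)
      apply (cases "Z = PA", simp_all)
      done
    then show False using yx inj unfolding inj_on_def by blast
  qed
  have noy: "\<not> pref Z u y" for Z u
  proof
    assume "pref Z u y"
    then have "y \<in> x ` {1..n}" unfolding prefZ by (elim disjE exE conjE) auto
    then show False using yx by blast
  qed
  have vry: "w \<in> range v \<Longrightarrow> w \<noteq> y \<Longrightarrow> \<exists>i\<in>{1..n}. w = x i" for w using rg by auto
  have par: "pareto_optimal v pref oo" if oor: "oo \<in> range v" "oo \<noteq> y" for oo
  proof -
    obtain i where i: "i \<in> {1..n}" "oo = x i" using vry[OF oor] by blast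
    show ?thesis unfolding pareto_optimal_def realizable_def
    proof
      assume "\<exists>q. (\<exists>p. v p = q) \<and> (\<exists>X. pref X oo q) \<and> (\<forall>Y. \<not> pref Y q oo)"
      then obtain q X where q: "q \<in> range v" "pref X oo q" "\<And>Y. \<not> pref Y q oo" by auto
      have "q \<noteq> y" using q(2) noy by blast
      then obtain j where j: "j \<in> {1..n}" "q = x j" using vry[OF q(1)] by blast
      have "i \<noteq> j"
      proof
        assume "i = j" then have "q = oo" using i j by simp
        then show False using q(2) irr by simp
      qed
      then show False
      proof (cases "i < j")
        case True
        have "pref PB q oo" unfolding pB
          apply (rule disjI2) apply (rule exI[of _ j], rule exI[of _ i]) using True i j by auto
        then show False using q(3) by blast
      next
        case False
        then have "j < i" using \<open>i \<noteq> j\<close> by simp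
        then have "pref PA q oo" unfolding pA
          apply - apply (rule disjI2) apply (rule exI[of _ j], rule exI[of _ i]) using i j by auto
        then show False using q(3) by blast
      qed
    qed
  qed
  have fin: "\<exists>\<sigma>. nash d v pref \<sigma> \<and> pareto_optimal v pref (v (play \<sigma>))"
    if ny: "v p \<noteq> y" and G: "\<And>k c. c \<noteq> p k \<Longrightarrow>
           \<exists>f. win d v (d (pre p k)) (pre p k @ [c]) {w. \<not> pref (d (pre p k)) (v p) w} f" for p
  proof -
    obtain \<sigma> where "play \<sigma> = p" "nash d v pref \<sigma>" using nash_from_path[OF irr G] by blast
    then show ?thesis using par[of "v p"] ny by auto
  qed
  define R where "R = (\<lambda>h. (\<exists>f. win d v PA h {y} f) \<and> (\<exists>f. win d v PB h {y} f))"
  have Rdev: "\<exists>f. win d v (d h) (h @ [c]) {y} f" if Rh: "R h" for h c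
  proof (cases "d h")
    case PA
    then obtain f where "win d v (d h) h {y} f" using Rh R_def by auto
    from win_child[OF this] show ?thesis by blast
  next
    case PB
    then obtain f where "win d v (d h) h {y} f" using Rh R_def by auto
    from win_child[OF this] show ?thesis by blast
  qed
  have Rdev2: "\<exists>f. win d v (d h) (h @ [c]) {w. \<not> pref (d h) oo w} f" if Rh2: "R h" for h c oo
  proof -
    obtain f where "win d v (d h) (h @ [c]) {y} f" using Rdev[OF Rh2] by blast
    then have "win d v (d h) (h @ [c]) {w. \<not> pref (d h) oo w} f" by (rule win_mono) (use noy in auto)
    then show ?thesis by blast
  qed
  obtain p0 where p0: "v p0 = x 1" using rg n1 by (metis atLeastAtMost_iff image_eqI insertI2 le_refl rangeE)
  have p0y: "v p0 \<noteq> y" using p0 yne n1 by auto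
  show ?thesis
  proof (cases "\<forall>k. R (pre p0 k)")
    case True
    show ?thesis by (rule fin[OF p0y]) (use Rdev2 True in blast)
  next
    case False
    define k0 where "k0 = (LEAST k. \<not> R (pre p0 k))"
    have nR: "\<not> R (pre p0 k0)" unfolding k0_def using False by (metis LeastI)
    have Rb: "k < k0 \<Longrightarrow> R (pre p0 k)" for k unfolding k0_def using not_less_Least by blast
    define h0 where "h0 = pre p0 k0"
    have ph0: "\<exists>f. win d v (d (take k h0)) (take k h0 @ [c]) {y} f" if "k < length h0" "c \<noteq> h0 ! k" for k c
    proof -
      have "take k h0 = pre p0 k" using that by (simp add: h0_def take_pre)
      then show ?thesis using Rdev Rb that by (simp add: h0_def)
    qed
    define rA where "rA = (\<lambda>w. if w = y then 0 else inv_into {1..n} x w)"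
    define rB where "rB = (\<lambda>w. if w = y then 0 else Suc n - inv_into {1..n} x w)"
    have rAx: "rA (x i) = i" if "i \<in> {1..n}" for i using that yne inj by (simp add: rA_def)
    have rBx: "rB (x i) = Suc n - i" if "i \<in> {1..n}" for i using that yne inj by (simp add: rB_def)
    have rAy: "rA y = 0" by (simp add: rA_def)
    have rBy: "rB y = 0" by (simp add: rB_def)
    have rgv: "w \<in> range v \<longleftrightarrow> w = y \<or> (\<exists>i\<in>{1..n}. w = x i)" for w using rg by auto
    have dA: "(\<exists>f. win d v PA h0 {y} f) \<or> (\<exists>f. win d v (oth PA) h0 (- {y}) f)"
      by (rule det_win[OF pc dt ms])
    have dB: "(\<exists>f. win d v PB h0 {y} f) \<or> (\<exists>f. win d v (oth PB) h0 (- {y}) f)"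
      by (rule det_win[OF pc dt ms])
    show ?thesis
    proof (cases "\<exists>f. win d v PA h0 {y} f")
      case False
      then obtain f0 where f0: "win d v (oth PA) h0 (- {y}) f0" using dA by blast
      have "\<exists>p. v p \<noteq> y \<and> (\<forall>k c. c \<noteq> p k \<longrightarrow>
           (\<exists>f. win d v (d (pre p k)) (pre p k @ [c]) {w. \<not> pref (d (pre p k)) (v p) w} f))"
      proof (rule easy_case[OF pc dt ms, where X=PA and pref=pref and r=rA and y=y and n=n and d=d and hh=h0 and ff=f0], goal_cases)
        case (1 u w) then show ?case unfolding pA by (elim disjE exE conjE) (auto simp: rAx rAy)
      next
        case (2 u w) then show ?case unfolding oth.simps pB by (elim disjE exE conjE) (auto simp: rAx rAy)
      next
        case 3 then show ?case by (rule rAy)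
      next
        case (4 w) then obtain i where "i \<in> {1..n}" "w = x i" using vry by blast
        then show ?case by (auto simp: rAx)
      next
        case (5 w) then show ?case
        proof (cases "w = y")
          case False
          then obtain i where "i \<in> {1..n}" "w = x i" using vry 5 by blast
          then show ?thesis by (auto simp: rAx)
        qed (simp add: rAy)
      next
        case (6 Z u) then show ?case using noy by blast
      next
        case 7 then show ?case using f0 by blast
      next
        case (8 k c) then show ?case using ph0 by blast
      qed
      then show ?thesis using fin by blast
    next
      case True
      then have "\<not> (\<exists>f. win d v PB h0 {y} f)" using nR unfolding R_def h0_def by blast
      then obtain f0 where f0: "win d v (oth PB) h0 (- {y}) f0" using dB by blast
      have "\<exists>p. v p \<noteq> y \<and> (\<forall>k c. c \<noteq> p k \<longrightarrow>
           (\<exists>f. win d v (d (pre p k)) (pre p k @ [c]) {w. \<not> pref (d (pre p k)) (v p) w} f))"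
      proof (rule easy_case[OF pc dt ms, where X=PB and pref=pref and r=rB and y=y and n=n and d=d and hh=h0 and ff=f0], goal_cases)
        case (1 u w) then show ?case unfolding pB by (elim disjE exE conjE) (auto simp: rBx rBy)
      next
        case (2 u w) then show ?case unfolding oth.simps pA by (elim disjE exE conjE) (auto simp: rBx rBy)
      next
        case 3 then show ?case by (rule rBy)
      next
        case (4 w) then obtain i where "i \<in> {1..n}" "w = x i" using vry by blast
        then show ?case by (auto simp: rBx)
      next
        case (5 w) then show ?case
        proof (cases "w = y")
          case False
          then obtain i where "i \<in> {1..n}" "w = x i" using vry 5 by blast
          then show ?thesis by (auto simp: rBx)
        qed (simp add: rBy)
      next
        case (6 Z u) then show ?case using noy by blast
      next
        case 7 then show ?case using f0 by blast
      next
        case (8 k c) then show ?case using ph0 by blast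
      qed
      then show ?thesis using fin by blast
    qed
  qed
qed

end
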